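(* Let $G$ be a connected graph with a list-assignment $L$ such that $|L(u)|\ge\deg(u)+1$ for all $u\in V(G)$. If there exist $v,w\in V(G)$ such that $vw\in E(G)$, $L(v)\not\subseteq L(w)$, and $G-v$ is connected, then $\alpha\sim\beta$ whenever $\alpha$ and $\beta$ are both unfrozen $L$-colourings.
   Context: An $L$-colouring is a proper colouring $\varphi$ with $\varphi(v)\in L(v)$ for all $v$. A vertex $u$ is frozen under $\varphi$ if every colour of $L(u)\setminus\{\varphi(u)\}$ appears on a neighbour of $u$; a colouring is unfrozen if at least one vertex is not frozen. $\alpha\sim\beta$ means $\alpha$ can be transformed into $\beta$ by a sequence of single-vertex recolouring steps, each keeping the colouring a proper $L$-colouring. *)

theory Defs
  imports Main
begin

definition simple_graph :: "'a set \<Rightarrow> ('a \<Rightarrow> 'a \<Rightarrow> bool) \<Rightarrow> bool" where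
  "simple_graph V E \<longleftrightarrow> finite V \<and> (\<forall>u w. E u w \<longrightarrow> u \<in> V \<and> w \<in> V)
     \<and> (\<forall>u w. E u w \<longrightarrow> E w u) \<and> (\<forall>u. \<not> E u u)"

definition degree :: "'a set \<Rightarrow> ('a \<Rightarrow> 'a \<Rightarrow> bool) \<Rightarrow> 'a \<Rightarrow> nat" where
  "degree V E u = card {w \<in> V. E u w}"

definition connected_on :: "'a set \<Rightarrow> ('a \<Rightarrow> 'a \<Rightarrow> bool) \<Rightarrow> bool" where
  "connected_on S E \<longleftrightarrow>
     (\<forall>x\<in>S. \<forall>y\<in>S. (\<lambda>a b. a \<in> S \<and> b \<in> S \<and> E a b)\<^sup>*\<^sup>* x y)"

text \<open>Proper L-colourings; outside V the colouring is fixed to undefined, so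
colourings are determined by their values on V.\<close>
definition L_colouring :: "'a set \<Rightarrow> ('a \<Rightarrow> 'a \<Rightarrow> bool) \<Rightarrow> ('a \<Rightarrow> 'c set) \<Rightarrow> ('a \<Rightarrow> 'c) \<Rightarrow> bool" where
  "L_colouring V E L \<phi> \<longleftrightarrow> (\<forall>u\<in>V. \<phi> u \<in> L u)
     \<and> (\<forall>u\<in>V. \<forall>w\<in>V. E u w \<longrightarrow> \<phi> u \<noteq> \<phi> w)
     \<and> (\<forall>u. u \<notin> V \<longrightarrow> \<phi> u = undefined)"

definition frozen :: "'a set \<Rightarrow> ('a \<Rightarrow> 'a \<Rightarrow> bool) \<Rightarrow> ('a \<Rightarrow> 'c set) \<Rightarrow> ('a \<Rightarrow> 'c) \<Rightarrow> 'a \<Rightarrow> bool" where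
  "frozen V E L \<phi> u \<longleftrightarrow> (\<forall>c \<in> L u - {\<phi> u}. \<exists>w\<in>V. E u w \<and> \<phi> w = c)"

definition unfrozen :: "'a set \<Rightarrow> ('a \<Rightarrow> 'a \<Rightarrow> bool) \<Rightarrow> ('a \<Rightarrow> 'c set) \<Rightarrow> ('a \<Rightarrow> 'c) \<Rightarrow> bool" where
  "unfrozen V E L \<phi> \<longleftrightarrow> L_colouring V E L \<phi> \<and> (\<exists>u\<in>V. \<not> frozen V E L \<phi> u)"

definition recolour_step :: "'a set \<Rightarrow> ('a \<Rightarrow> 'a \<Rightarrow> bool) \<Rightarrow> ('a \<Rightarrow> 'c set) \<Rightarrow> ('a \<Rightarrow> 'c) \<Rightarrow> ('a \<Rightarrow> 'c) \<Rightarrow> bool" where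
  "recolour_step V E L \<alpha> \<beta> \<longleftrightarrow> L_colouring V E L \<alpha> \<and> L_colouring V E L \<beta>
     \<and> (\<exists>v\<in>V. \<exists>c. \<beta> = \<alpha>(v := c))"

definition reconf :: "'a set \<Rightarrow> ('a \<Rightarrow> 'a \<Rightarrow> bool) \<Rightarrow> ('a \<Rightarrow> 'c set) \<Rightarrow> ('a \<Rightarrow> 'c) \<Rightarrow> ('a \<Rightarrow> 'c) \<Rightarrow> bool" where
  "reconf V E L \<alpha> \<beta> \<longleftrightarrow> (recolour_step V E L)\<^sup>*\<^sup>* \<alpha> \<beta>"

end

theory Submission
  imports Defs
begin


definition nbrs :: "'a set \<Rightarrow> ('a \<Rightarrow> 'a \<Rightarrow> bool) \<Rightarrow> 'a \<Rightarrow> 'a set" where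
  "nbrs V E x = {y \<in> V. E x y}"

lemma reconf_refl: "reconf V E L \<alpha> \<alpha>"
  unfolding reconf_def by simp

lemma reconf_trans: "reconf V E L \<alpha> \<beta> \<Longrightarrow> reconf V E L \<beta> \<gamma> \<Longrightarrow> reconf V E L \<alpha> \<gamma>"
  unfolding reconf_def by (rule rtranclp_trans)

lemma recolour_step_sym: "recolour_step V E L \<alpha> \<beta> \<Longrightarrow> recolour_step V E L \<beta> \<alpha>"
  unfolding recolour_step_def
proof (elim conjE bexE exE)
  fix v c assume "L_colouring V E L \<alpha>" "L_colouring V E L \<beta>" "v \<in> V" "\<beta> = \<alpha>(v := c)"
  then show "L_colouring V E L \<beta> \<and> L_colouring V E L \<alpha> \<and> (\<exists>v\<in>V. \<exists>c. \<alpha> = \<beta>(v := c))"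
    by (intro conjI bexI[of _ v] exI[of _ "\<alpha> v"]) auto
qed

lemma reconf_sym: "reconf V E L \<alpha> \<beta> \<Longrightarrow> reconf V E L \<beta> \<alpha>"
  unfolding reconf_def
proof (induction rule: rtranclp_induct)
  case base then show ?case by simp
next
  case (step y z)
  then show ?case
    by (meson converse_rtranclp_into_rtranclp recolour_step_sym)
qed

lemma colouring_upd:
  assumes col: "L_colouring V E L \<phi>" and sym: "\<And>x y. E x y \<Longrightarrow> E y x"
    and x: "x \<in> V" and e: "e \<in> L x" and fr: "\<forall>y\<in>V. E x y \<longrightarrow> \<phi> y \<noteq> e"
  shows "L_colouring V E L (\<phi>(x := e))"
  using col x e fr sym unfolding L_colouring_def
  by (auto simp: fun_upd_def)

lemma step_upd:
  assumes col: "L_colouring V E L \<phi>" and sym: "\<And>x y. E x y \<Longrightarrow> E y x"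
    and x: "x \<in> V" and e: "e \<in> L x" and fr: "\<forall>y\<in>V. E x y \<longrightarrow> \<phi> y \<noteq> e"
  shows "reconf V E L \<phi> (\<phi>(x := e))"
proof -
  have "recolour_step V E L \<phi> (\<phi>(x := e))"
    unfolding recolour_step_def using colouring_upd[OF assms] col x by blast
  then show ?thesis unfolding reconf_def by simp
qed

lemma tight:
  assumes sg: "simple_graph V E" and col: "L_colouring V E L \<phi>" and x: "x \<in> V"
    and fin: "finite (L x)" and deg: "degree V E x + 1 \<le> card (L x)"
    and fr: "frozen V E L \<phi> x"
  shows "\<phi> ` {y\<in>V. E x y} = L x - {\<phi> x}" and "inj_on \<phi> {y\<in>V. E x y}"
proof -
  let ?N = "{y\<in>V. E x y}"
  have finV: "finite V" using sg unfolding simple_graph_def by blast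
  have finN: "finite ?N" using finV by simp
  have sub: "L x - {\<phi> x} \<subseteq> \<phi> ` ?N"
  proof
    fix c assume "c \<in> L x - {\<phi> x}"
    then obtain w where "w\<in>V" "E x w" "\<phi> w = c" using fr unfolding frozen_def by blast
    then show "c \<in> \<phi> ` ?N" by blast
  qed
  have inL: "\<phi> x \<in> L x" using col x unfolding L_colouring_def by blast
  have c1: "card (L x - {\<phi> x}) = card (L x) - 1" using inL fin by simp
  have c2: "card (\<phi> ` ?N) \<le> card ?N" using finN card_image_le by blast
  have c3: "card ?N = degree V E x" unfolding degree_def by simp
  have le: "card (\<phi> ` ?N) \<le> card (L x - {\<phi> x})" using c1 c2 c3 deg by linarith
  have eq: "L x - {\<phi> x} = \<phi> ` ?N"
    using card_seteq[OF finite_imageI[OF finN] sub le] .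
  then show "\<phi> ` ?N = L x - {\<phi> x}" by simp
  have "card (\<phi> ` ?N) = card ?N"
    using c1 c2 c3 deg eq by (metis add_diff_cancel_right' diff_le_mono le_antisym)
  then show "inj_on \<phi> ?N" using eq_card_imp_inj_on[OF finN] by blast
qed

lemma moved_unfrozen:
  assumes col: "L_colouring V E L \<phi>" and irr: "\<And>x. \<not> E x x"
    and x: "x \<in> V" and e: "e \<noteq> \<phi> x"
  shows "\<not> frozen V E L (\<phi>(x := e)) x"
proof -
  have 1: "\<phi> x \<in> L x - {e}" using col x e unfolding L_colouring_def by auto
  have 2: "\<forall>y\<in>V. E x y \<longrightarrow> (\<phi>(x := e)) y \<noteq> \<phi> x"
    using col x irr unfolding L_colouring_def by (metis fun_upd_other)
  show ?thesis unfolding frozen_def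
  proof
    assume "\<forall>c\<in>L x - {(\<phi>(x:=e)) x}. \<exists>w\<in>V. E x w \<and> (\<phi>(x:=e)) w = c"
    then obtain w where "w\<in>V" "E x w" "(\<phi>(x:=e)) w = \<phi> x" using 1 by auto
    then show False using 2 by auto
  qed
qed

definition slack_reach :: "'a set \<Rightarrow> ('a \<Rightarrow> 'a \<Rightarrow> bool) \<Rightarrow> ('a \<Rightarrow> 'c set) \<Rightarrow> 'a \<Rightarrow> bool" where
  "slack_reach V E M u \<longleftrightarrow> (\<exists>s\<in>V. (\<lambda>a b. a \<in> V \<and> b \<in> V \<and> E a b)\<^sup>*\<^sup>* u s \<and> degree V E s + 2 \<le> card (M s))"

lemma degree_sub: "finite V \<Longrightarrow> degree (V - {r}) E x \<le> degree V E x"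
  unfolding degree_def by (rule card_mono) auto

lemma degree_nbr: "finite V \<Longrightarrow> r \<in> V \<Longrightarrow> E x r \<Longrightarrow> degree (V - {r}) E x + 1 = degree V E x"
proof -
  assume f: "finite V" and r: "r \<in> V" and e: "E x r"
  have "{w \<in> V. E x w} = insert r {w \<in> V - {r}. E x w}" using r e by auto
  then show ?thesis unfolding degree_def using f by simp
qed

lemma col_extend:
  assumes col: "L_colouring (V - {r}) E M \<delta>" and sym: "\<And>x y. E x y \<Longrightarrow> E y x"
    and irr: "\<And>x. \<not> E x x" and r: "r \<in> V" and b: "b \<in> M r"
    and fr: "\<forall>x\<in>V. E r x \<longrightarrow> \<delta> x \<noteq> b"
  shows "L_colouring V E M (\<delta>(r := b))"
  using col b fr r sym irr unfolding L_colouring_def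
  by (auto simp: fun_upd_def)

lemma lift_slack:
  assumes finV: "finite V" and sym: "\<And>x y. E x y \<Longrightarrow> E y x" and irr: "\<And>x. \<not> E x x"
    and r: "r \<in> V" and finM: "finite (M r)" and sl: "degree V E r + 2 \<le> card (M r)"
    and rc: "reconf (V - {r}) E M \<gamma> \<delta>"
    and a: "L_colouring V E M (\<gamma>(r := a))"
  shows "\<exists>b. L_colouring V E M (\<delta>(r := b)) \<and> reconf V E M (\<gamma>(r := a)) (\<delta>(r := b))"
  using rc unfolding reconf_def
proof (induction rule: rtranclp_induct)
  case base
  show ?case using a by (metis rtranclp.rtrancl_refl)
next
  case (step \<delta> \<delta>')
  from step.IH obtain b where b1: "L_colouring V E M (\<delta>(r := b))"
    and b2: "(recolour_step V E M)\<^sup>*\<^sup>* (\<gamma>(r := a)) (\<delta>(r := b))" by blast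
  from step.hyps(2) obtain y c' where colD: "L_colouring (V - {r}) E M \<delta>"
    and colD': "L_colouring (V - {r}) E M \<delta>'" and y: "y \<in> V - {r}" and D': "\<delta>' = \<delta>(y := c')"
    unfolding recolour_step_def by blast
  have bM: "b \<in> M r" using b1 r unfolding L_colouring_def by auto
  have bnb: "\<forall>x\<in>V. E r x \<longrightarrow> \<delta> x \<noteq> b"
  proof (intro ballI impI)
    fix x assume x: "x \<in> V" "E r x"
    then have "x \<noteq> r" using irr by blast
    then show "\<delta> x \<noteq> b" using b1 r x unfolding L_colouring_def
      by (metis fun_upd_other fun_upd_same)
  qed
  show ?case
  proof (cases "E r y \<and> c' = b")
    case False
    have fr: "\<forall>x\<in>V. E r x \<longrightarrow> \<delta>' x \<noteq> b" using False bnb D' by auto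
    have c1: "L_colouring V E M (\<delta>'(r := b))" by (rule col_extend[OF colD' sym irr r bM fr])
    have "\<delta>'(r := b) = (\<delta>(r := b))(y := c')" using D' y by (auto intro!: ext)
    then have "recolour_step V E M (\<delta>(r := b)) (\<delta>'(r := b))"
      unfolding recolour_step_def using b1 c1 y by blast
    then show ?thesis using c1 b2 by (meson rtranclp.rtrancl_into_rtrancl)
  next
    case True
    let ?S = "insert c' (\<delta> ` {x\<in>V. E r x})"
    have finS: "finite ?S" using finV by simp
    have "card ?S \<le> Suc (card (\<delta> ` {x\<in>V. E r x}))" by (simp add: card_insert_le_m1)
    also have "card (\<delta> ` {x\<in>V. E r x}) \<le> degree V E r"
      unfolding degree_def using finV by (simp add: card_image_le)
    finally have lt: "card ?S < card (M r)" using sl by linarith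
    have "\<not> M r \<subseteq> ?S"
    proof
      assume "M r \<subseteq> ?S"
      then have "card (M r) \<le> card ?S" using card_mono[OF finS] by blast
      then show False using lt by linarith
    qed
    then obtain b' where b'M: "b' \<in> M r" and b'S: "b' \<notin> ?S" by blast
    have fr1: "\<forall>x\<in>V. E r x \<longrightarrow> \<delta> x \<noteq> b'" using b'S by auto
    have fr2: "\<forall>x\<in>V. E r x \<longrightarrow> \<delta>' x \<noteq> b'" using b'S D' by auto
    have c1: "L_colouring V E M (\<delta>(r := b'))" by (rule col_extend[OF colD sym irr r b'M fr1])
    have c2: "L_colouring V E M (\<delta>'(r := b'))" by (rule col_extend[OF colD' sym irr r b'M fr2])
    have "\<delta>(r := b') = (\<delta>(r := b))(r := b')" by simp
    then have s1: "recolour_step V E M (\<delta>(r := b)) (\<delta>(r := b'))"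
      unfolding recolour_step_def using b1 c1 r by blast
    have "\<delta>'(r := b') = (\<delta>(r := b'))(y := c')" using D' y by (auto intro!: ext)
    then have s2: "recolour_step V E M (\<delta>(r := b')) (\<delta>'(r := b'))"
      unfolding recolour_step_def using c1 c2 y by blast
    show ?thesis using c2 b2 s1 s2 by (meson rtranclp.rtrancl_into_rtrancl)
  qed
qed

lemma slack_reach_del:
  assumes finV: "finite V" and r: "r \<in> V"
    and deg: "\<forall>u\<in>V. finite (M u) \<and> degree V E u + 1 \<le> card (M u)"
    and path: "(\<lambda>a b. a \<in> V \<and> b \<in> V \<and> E a b)\<^sup>*\<^sup>* x s"
    and s: "s \<in> V" and ssl: "degree V E s + 2 \<le> card (M s)"
  shows "x \<in> V - {r} \<longrightarrow> slack_reach (V - {r}) E M x"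
  using path
proof (induction rule: converse_rtranclp_induct)
  case base
  show ?case
  proof
    assume "s \<in> V - {r}"
    moreover have "degree (V - {r}) E s + 2 \<le> card (M s)"
      using degree_sub[OF finV, of r E s] ssl by linarith
    ultimately show "slack_reach (V - {r}) E M s"
      unfolding slack_reach_def by blast
  qed
next
  case (step x y)
  show ?case
  proof
    assume x: "x \<in> V - {r}"
    show "slack_reach (V - {r}) E M x"
    proof (cases "y = r")
      case True
      then have "E x r" using step.hyps(1) by blast
      then have "degree (V - {r}) E x + 1 = degree V E x" using degree_nbr[OF finV r] by blast
      moreover have "degree V E x + 1 \<le> card (M x)" using deg x by blast
      ultimately have "degree (V - {r}) E x + 2 \<le> card (M x)" by linarith
      then show ?thesis unfolding slack_reach_def using x by blast
    next
      case False
      then have y: "y \<in> V - {r}" using step.hyps(1) by blast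
      then obtain s' where s': "s' \<in> V - {r}"
        and p: "(\<lambda>a b. a \<in> V - {r} \<and> b \<in> V - {r} \<and> E a b)\<^sup>*\<^sup>* y s'"
        and sl: "degree (V - {r}) E s' + 2 \<le> card (M s')"
        using step.IH unfolding slack_reach_def by blast
      have "(\<lambda>a b. a \<in> V - {r} \<and> b \<in> V - {r} \<and> E a b) x y" using x y step.hyps(1) by blast
      then have "(\<lambda>a b. a \<in> V - {r} \<and> b \<in> V - {r} \<and> E a b)\<^sup>*\<^sup>* x s'"
        using p by (rule converse_rtranclp_into_rtranclp)
      then show ?thesis unfolding slack_reach_def using s' sl by blast
    qed
  qed
qed

lemma col_restrict:
  assumes "L_colouring V E M \<alpha>"
  shows "L_colouring (V - {r}) E M (\<alpha>(r := undefined))"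
  using assms unfolding L_colouring_def by auto

lemma slack_connected:
  assumes "finite V" "\<And>x y. E x y \<Longrightarrow> E y x" "\<And>x. \<not> E x x"
    "\<forall>u\<in>V. finite (M u) \<and> degree V E u + 1 \<le> card (M u)"
    "\<forall>u\<in>V. slack_reach V E M u"
    "L_colouring V E M \<alpha>" "L_colouring V E M \<beta>"
  shows "reconf V E M \<alpha> \<beta>"
  using assms
proof (induction "card V" arbitrary: V \<alpha> \<beta> rule: less_induct)
  case less
  note finV = less.prems(1) and sym = less.prems(2) and irr = less.prems(3)
  show ?case
  proof (cases "V = {}")
    case True
    have "\<alpha> = \<beta>"
    proof
      fix x show "\<alpha> x = \<beta> x" using less.prems(6,7) True unfolding L_colouring_def by auto
    qed
    then show ?thesis by (simp add: reconf_refl)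
  next
    case False
    then obtain u where "u \<in> V" by blast
    then obtain r where r: "r \<in> V" and rsl: "degree V E r + 2 \<le> card (M r)"
      using less.prems(5) unfolding slack_reach_def by blast
    have finV': "finite (V - {r})" using finV by simp
    have card_lt: "card (V - {r}) < card V" using r finV by (meson card_Diff1_less)
    have h4: "\<forall>u\<in>V - {r}. finite (M u) \<and> degree (V - {r}) E u + 1 \<le> card (M u)"
      using less.prems(4) degree_sub[OF finV] by (meson DiffD1 le_trans add_le_mono1)
    have h5: "\<forall>u\<in>V - {r}. slack_reach (V - {r}) E M u"
    proof
      fix x assume x: "x \<in> V - {r}"
      then obtain s where s: "s \<in> V" and p: "(\<lambda>a b. a \<in> V \<and> b \<in> V \<and> E a b)\<^sup>*\<^sup>* x s"
        and ssl: "degree V E s + 2 \<le> card (M s)"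
        using less.prems(5) unfolding slack_reach_def by blast
      show "slack_reach (V - {r}) E M x"
        using slack_reach_del[OF finV r less.prems(4) p s ssl] x by blast
    qed
    have IH: "reconf (V - {r}) E M (\<alpha>(r := undefined)) (\<beta>(r := undefined))"
      using less.hyps[OF card_lt finV' sym irr h4 h5 col_restrict[OF less.prems(6)]
          col_restrict[OF less.prems(7)]] .
    have finM: "finite (M r)" using less.prems(4) r by blast
    have a: "L_colouring V E M ((\<alpha>(r := undefined))(r := \<alpha> r))" using less.prems(6) by simp
    obtain b where b1: "L_colouring V E M ((\<beta>(r := undefined))(r := b))"
      and b2: "reconf V E M ((\<alpha>(r := undefined))(r := \<alpha> r)) ((\<beta>(r := undefined))(r := b))"
      using lift_slack[OF finV sym irr r finM rsl IH a] by blast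
    have "\<beta> = ((\<beta>(r := undefined))(r := b))(r := \<beta> r)" by simp
    then have "recolour_step V E M ((\<beta>(r := undefined))(r := b)) \<beta>"
      unfolding recolour_step_def using b1 less.prems(7) r by blast
    then have "reconf V E M ((\<beta>(r := undefined))(r := b)) \<beta>"
      unfolding reconf_def by simp
    then show ?thesis using b2 reconf_trans by fastforce
  qed
qed

lemma fixed_col:
  assumes sym: "\<And>x y. E x y \<Longrightarrow> E y x" and irr: "\<And>x. \<not> E x x"
    and v: "v \<in> V" and c: "c \<in> L v"
    and M: "\<forall>u\<in>V - {v}. M u \<subseteq> L u \<and> (E v u \<longrightarrow> c \<notin> M u)"
    and col: "L_colouring (V - {v}) E M \<delta>"
  shows "L_colouring V E L (\<delta>(v := c))"
proof -
  have a1: "\<forall>u\<in>V - {v}. \<delta> u \<in> M u" and a2: "\<forall>u\<in>V - {v}. \<forall>u'\<in>V - {v}. E u u' \<longrightarrow> \<delta> u \<noteq> \<delta> u'"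
    and a3: "\<forall>u. u \<notin> V - {v} \<longrightarrow> \<delta> u = undefined"
    using col unfolding L_colouring_def by blast+
  have nc: "\<And>u. u \<in> V \<Longrightarrow> E v u \<Longrightarrow> \<delta> u \<noteq> c"
  proof -
    fix u assume u: "u \<in> V" "E v u"
    then have "u \<in> V - {v}" using irr by auto
    then show "\<delta> u \<noteq> c" using a1 M u by blast
  qed
  show ?thesis unfolding L_colouring_def
  proof (intro conjI ballI allI impI)
    fix u assume u: "u \<in> V"
    show "(\<delta>(v := c)) u \<in> L u"
    proof (cases "u = v")
      case True then show ?thesis using c by simp
    next
      case False then show ?thesis using a1 M u by auto
    qed
  next
    fix u u' assume u: "u \<in> V" and u': "u' \<in> V" and e: "E u u'"
    show "(\<delta>(v := c)) u \<noteq> (\<delta>(v := c)) u'"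
    proof (cases "u = v")
      case True
      then have "u' \<noteq> v" using e irr by blast
      then show ?thesis using True nc u' e by auto
    next
      case False
      show ?thesis
      proof (cases "u' = v")
        case True
        then show ?thesis using False nc u sym[OF e] by auto
      next
        case False2: False
        then show ?thesis using False a2 u u' e by auto
      qed
    qed
  next
    fix u assume "u \<notin> V"
    then show "(\<delta>(v := c)) u = undefined" using a3 v by auto
  qed
qed

lemma fixed_lift:
  assumes sym: "\<And>x y. E x y \<Longrightarrow> E y x" and irr: "\<And>x. \<not> E x x"
    and v: "v \<in> V" and c: "c \<in> L v"
    and M: "\<forall>u\<in>V - {v}. M u \<subseteq> L u \<and> (E v u \<longrightarrow> c \<notin> M u)"
    and rc: "reconf (V - {v}) E M \<gamma> \<delta>"
  shows "reconf V E L (\<gamma>(v := c)) (\<delta>(v := c))"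
  using rc unfolding reconf_def
proof (induction rule: rtranclp_induct)
  case base
  then show ?case by simp
next
  case (step d1 d2)
  from step.hyps(2) obtain y c' where colD: "L_colouring (V - {v}) E M d1"
    and colD': "L_colouring (V - {v}) E M d2" and y: "y \<in> V - {v}" and D': "d2 = d1(y := c')"
    unfolding recolour_step_def by blast
  have c1: "L_colouring V E L (d1(v := c))" by (rule fixed_col[OF sym irr v c M colD])
  have c2: "L_colouring V E L (d2(v := c))" by (rule fixed_col[OF sym irr v c M colD'])
  have "d2(v := c) = (d1(v := c))(y := c')" using D' y by (auto intro: ext)
  then have s: "recolour_step V E L (d1(v := c)) (d2(v := c))"
    unfolding recolour_step_def using c1 c2 y by blast
  show ?case using step.IH s by (meson rtranclp.rtrancl_into_rtrancl)
qed

lemma Cc_connected: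
  assumes sg: "simple_graph V E"
    and conn: "connected_on (V - {v}) E"
    and lists: "\<forall>u\<in>V. finite (L u) \<and> card (L u) \<ge> degree V E u + 1"
    and v: "v \<in> V" and w: "w \<in> V" and vw: "E v w"
    and cv: "c \<in> L v" and cw: "c \<notin> L w"
    and g1: "L_colouring V E L \<gamma>1" and g2: "L_colouring V E L \<gamma>2"
    and g1v: "\<gamma>1 v = c" and g2v: "\<gamma>2 v = c"
  shows "reconf V E L \<gamma>1 \<gamma>2"
proof -
  have finV: "finite V" and sym: "\<And>x y. E x y \<Longrightarrow> E y x" and irr: "\<And>x. \<not> E x x"
    using sg unfolding simple_graph_def by blast+
  define M where "M = (\<lambda>u. if E v u then L u - {c} else L u)"
  have Mprop: "\<forall>u\<in>V - {v}. M u \<subseteq> L u \<and> (E v u \<longrightarrow> c \<notin> M u)"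
    unfolding M_def by auto
  have h4: "\<forall>u\<in>V - {v}. finite (M u) \<and> degree (V - {v}) E u + 1 \<le> card (M u)"
  proof
    fix u assume u: "u \<in> V - {v}"
    show "finite (M u) \<and> degree (V - {v}) E u + 1 \<le> card (M u)"
    proof (cases "E v u")
      case True
      have d: "degree (V - {v}) E u + 1 = degree V E u" using degree_nbr[of V v E u, OF finV v sym[OF True]] .
      have "card (L u - {c}) \<ge> card (L u) - 1" using diff_card_le_card_Diff[of "{c}" "L u"] by simp
      then show ?thesis using True d lists u unfolding M_def by auto
    next
      case False
      then show ?thesis using lists u degree_sub[OF finV, of v E u] unfolding M_def by auto
    qed
  qed
  have wV': "w \<in> V - {v}" using w vw irr by auto
  have wsl: "degree (V - {v}) E w + 2 \<le> card (M w)"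
  proof -
    have d: "degree (V - {v}) E w + 1 = degree V E w" using degree_nbr[of V v E w, OF finV v sym[OF vw]] .
    have "M w = L w" using cw vw unfolding M_def by auto
    then show ?thesis using d lists w by auto
  qed
  have h5: "\<forall>u\<in>V - {v}. slack_reach (V - {v}) E M u"
    unfolding slack_reach_def using conn wV' wsl unfolding connected_on_def by blast
  have r1: "L_colouring (V - {v}) E M (\<gamma>1(v := undefined))"
    using g1 g1v v sym unfolding L_colouring_def M_def by auto
  have r2: "L_colouring (V - {v}) E M (\<gamma>2(v := undefined))"
    using g2 g2v v sym unfolding L_colouring_def M_def by auto
  have "reconf (V - {v}) E M (\<gamma>1(v := undefined)) (\<gamma>2(v := undefined))"
    using slack_connected[OF _ sym irr h4 h5 r1 r2] finV by simp
  then have "reconf V E L ((\<gamma>1(v := undefined))(v := c)) ((\<gamma>2(v := undefined))(v := c))"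
    using fixed_lift[OF sym irr v cv Mprop] by blast
  moreover have "(\<gamma>1(v := undefined))(v := c) = \<gamma>1" using g1v by auto
  moreover have "(\<gamma>2(v := undefined))(v := c) = \<gamma>2" using g2v by auto
  ultimately show ?thesis by simp
qed



lemma reconf_col: "reconf V E L \<phi> \<psi> \<Longrightarrow> L_colouring V E L \<phi> \<Longrightarrow> L_colouring V E L \<psi>"
  unfolding reconf_def by (induction rule: rtranclp_induct) (auto simp: recolour_step_def)

locale setting =
  fixes V :: "'a set" and E :: "'a \<Rightarrow> 'a \<Rightarrow> bool" and L :: "'a \<Rightarrow> 'c set"
    and v w :: 'a and c :: 'c
  assumes sg: "simple_graph V E" and conn: "connected_on (V - {v}) E"
    and lists: "\<forall>u\<in>V. finite (L u) \<and> card (L u) \<ge> degree V E u + 1"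
    and v: "v \<in> V" and w: "w \<in> V" and vw: "E v w" and cv: "c \<in> L v" and cw: "c \<notin> L w"
begin

lemma finV: "finite V" using sg unfolding simple_graph_def by blast
lemma sym: "E x y \<Longrightarrow> E y x" using sg unfolding simple_graph_def by blast
lemma irr: "\<not> E x x" using sg unfolding simple_graph_def by blast

definition Bs :: "('a \<Rightarrow> 'c) \<Rightarrow> 'a set" where "Bs \<phi> = {y\<in>V. E v y \<and> \<phi> y = c}"
definition Goal :: "('a \<Rightarrow> 'c) \<Rightarrow> bool" where "Goal \<phi> \<longleftrightarrow> (\<exists>\<psi>. reconf V E L \<phi> \<psi> \<and> \<psi> v = c)"

lemma finB: "finite (Bs \<phi>)" unfolding Bs_def using finV by simp

lemma stp:
  assumes "L_colouring V E L \<phi>" "x \<in> V" "e \<in> L x" "\<forall>y\<in>V. E x y \<longrightarrow> \<phi> y \<noteq> e"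
  shows "L_colouring V E L (\<phi>(x := e))" "reconf V E L \<phi> (\<phi>(x := e))"
  using colouring_upd[OF assms(1) sym assms(2-4)] step_upd[OF assms(1) sym assms(2-4)] by auto

lemma free:
  assumes "\<not> frozen V E L \<phi> x"
  obtains e where "e \<in> L x" "e \<noteq> \<phi> x" "\<forall>y\<in>V. E x y \<longrightarrow> \<phi> y \<noteq> e"
  using assms unfolding frozen_def by blast

lemma t_uniq:
  assumes "L_colouring V E L \<phi>" "x \<in> V" "frozen V E L \<phi> x"
    "y \<in> V" "E x y" "y' \<in> V" "E x y'" "\<phi> y = \<phi> y'"
  shows "y = y'"
proof -
  have "inj_on \<phi> {y\<in>V. E x y}" using tight(2)[OF sg assms(1,2) _ _ assms(3)] lists assms(2) by auto
  then show ?thesis using assms(4-8) unfolding inj_on_def by blast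
qed

lemma t_in:
  assumes "L_colouring V E L \<phi>" "x \<in> V" "frozen V E L \<phi> x" "y \<in> V" "E x y"
  shows "\<phi> y \<in> L x"
proof -
  have "\<phi> ` {y\<in>V. E x y} = L x - {\<phi> x}" using tight(1)[OF sg assms(1,2) _ _ assms(3)] lists assms(2) by auto
  then show ?thesis using assms(4,5) by blast
qed

lemma proper: "L_colouring V E L \<phi> \<Longrightarrow> x \<in> V \<Longrightarrow> y \<in> V \<Longrightarrow> E x y \<Longrightarrow> \<phi> x \<noteq> \<phi> y"
  unfolding L_colouring_def by blast

lemma inL: "L_colouring V E L \<phi> \<Longrightarrow> x \<in> V \<Longrightarrow> \<phi> x \<in> L x"
  unfolding L_colouring_def by blast

end



context setting begin

lemma uniq2:
  assumes "L_colouring V E L \<phi>" "x \<in> V" "frozen V E L \<phi> x" "y0 \<in> V" "E x y0"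
  shows "\<forall>y\<in>V. E x y \<longrightarrow> \<phi> y = \<phi> y0 \<longrightarrow> y = y0"
proof (intro ballI impI)
  fix y assume "y \<in> V" "E x y" "\<phi> y = \<phi> y0"
  then show "y = y0" using t_uniq[OF assms(1,2,3) \<open>y \<in> V\<close> \<open>E x y\<close> assms(4,5)] by blast
qed

lemma wfree:
  assumes col: "L_colouring V E L \<phi>" and u: "u \<in> V" "E v u" "\<phi> u = c"
    and fv: "frozen V E L \<phi> v" and fu: "frozen V E L \<phi> u" and nfw: "\<not> frozen V E L \<phi> w"
  shows "Goal \<phi>"
proof -
  obtain f where f: "f \<in> L w" "f \<noteq> \<phi> w" "\<forall>y\<in>V. E w y \<longrightarrow> \<phi> y \<noteq> f" using free[OF nfw] by blast
  have ac: "\<phi> v \<noteq> c" using proper[OF col v u(1) u(2)] u(3) by simp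
  have bv: "\<phi> w \<in> L v" using t_in[OF col v fv w vw] .
  have au: "\<phi> v \<in> L u" using t_in[OF col u(1) fu v sym[OF u(2)]] .
  have fa: "f \<noteq> \<phi> v" using f(3) v sym[OF vw] by blast
  have fc: "f \<noteq> c" using f(1) cw by blast
  have ba: "\<phi> w \<noteq> \<phi> v" using proper[OF col v w vw] by simp
  have ub: "\<forall>y\<in>V. E v y \<longrightarrow> \<phi> y = \<phi> w \<longrightarrow> y = w" using uniq2[OF col v fv w vw] .
  have uc: "\<forall>y\<in>V. E v y \<longrightarrow> \<phi> y = \<phi> u \<longrightarrow> y = u" using uniq2[OF col v fv u(1,2)] .
  have ua: "\<forall>y\<in>V. E u y \<longrightarrow> \<phi> y = \<phi> v \<longrightarrow> y = v" using uniq2[OF col u(1) fu v sym[OF u(2)]] .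
  have uv: "u \<noteq> v" using u(2) irr by blast
  have wv: "w \<noteq> v" using vw irr by blast
  define \<phi>1 where "\<phi>1 = \<phi>(w := f)"
  have s1: "L_colouring V E L \<phi>1" "reconf V E L \<phi> \<phi>1" using stp[OF col w f(1) f(3)] unfolding \<phi>1_def by auto
  have c2: "\<forall>y\<in>V. E v y \<longrightarrow> \<phi>1 y \<noteq> \<phi> w" using ub f(2) unfolding \<phi>1_def by auto
  define \<phi>2 where "\<phi>2 = \<phi>1(v := \<phi> w)"
  have s2: "L_colouring V E L \<phi>2" "reconf V E L \<phi>1 \<phi>2" using stp[OF s1(1) v bv c2] unfolding \<phi>2_def by auto
  have c3: "\<forall>y\<in>V. E u y \<longrightarrow> \<phi>2 y \<noteq> \<phi> v" using ua fa ba wv uv unfolding \<phi>1_def \<phi>2_def by auto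
  define \<phi>3 where "\<phi>3 = \<phi>2(u := \<phi> v)"
  have s3: "L_colouring V E L \<phi>3" "reconf V E L \<phi>2 \<phi>3" using stp[OF s2(1) u(1) au c3] unfolding \<phi>3_def by auto
  have c4: "\<forall>y\<in>V. E v y \<longrightarrow> \<phi>3 y \<noteq> c" using uc u(3) ac fc irr unfolding \<phi>1_def \<phi>2_def \<phi>3_def by auto
  define \<phi>4 where "\<phi>4 = \<phi>3(v := c)"
  have s4: "reconf V E L \<phi>3 \<phi>4" using stp[OF s3(1) v cv c4] unfolding \<phi>4_def by auto
  have "reconf V E L \<phi> \<phi>4" using reconf_trans[OF s1(2) reconf_trans[OF s2(2) reconf_trans[OF s3(2) s4]]] .
  moreover have "\<phi>4 v = c" unfolding \<phi>4_def by simp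
  ultimately show ?thesis unfolding Goal_def by blast
qed

lemma seven:
  assumes col: "L_colouring V E L \<phi>" and u: "u \<in> V" "E v u" "\<phi> u = c"
    and fv: "frozen V E L \<phi> v" and fu: "frozen V E L \<phi> u" and fw: "frozen V E L \<phi> w"
    and r: "r \<in> V" "E v r" "r \<noteq> u" "r \<noteq> w" "c \<in> L r" "\<forall>y\<in>V. E r y \<longrightarrow> \<phi> y \<noteq> c"
  shows "Goal \<phi>"
proof -
  have ac: "\<phi> v \<noteq> c" using proper[OF col v u(1) u(2)] u(3) by simp
  have bv: "\<phi> w \<in> L v" using t_in[OF col v fv w vw] .
  have sv: "\<phi> r \<in> L v" using t_in[OF col v fv r(1,2)] .
  have sr: "\<phi> r \<in> L r" using inL[OF col r(1)] .
  have au: "\<phi> v \<in> L u" using t_in[OF col u(1) fu v sym[OF u(2)]] .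
  have aw: "\<phi> v \<in> L w" using t_in[OF col w fw v sym[OF vw]] .
  have ba: "\<phi> w \<noteq> \<phi> v" using proper[OF col v w vw] by simp
  have sa: "\<phi> r \<noteq> \<phi> v" using proper[OF col v r(1,2)] by simp
  have bc: "\<phi> w \<noteq> c" using inL[OF col w] cw by auto
  have ub: "\<forall>y\<in>V. E v y \<longrightarrow> \<phi> y = \<phi> w \<longrightarrow> y = w" using uniq2[OF col v fv w vw] .
  have uc: "\<forall>y\<in>V. E v y \<longrightarrow> \<phi> y = \<phi> u \<longrightarrow> y = u" using uniq2[OF col v fv u(1,2)] .
  have us: "\<forall>y\<in>V. E v y \<longrightarrow> \<phi> y = \<phi> r \<longrightarrow> y = r" using uniq2[OF col v fv r(1,2)] .
  have ua: "\<forall>y\<in>V. E u y \<longrightarrow> \<phi> y = \<phi> v \<longrightarrow> y = v" using uniq2[OF col u(1) fu v sym[OF u(2)]] .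
  have uaw: "\<forall>y\<in>V. E w y \<longrightarrow> \<phi> y = \<phi> v \<longrightarrow> y = v" using uniq2[OF col w fw v sym[OF vw]] .
  have sc: "\<phi> r \<noteq> c" using uc r(1,2,3) u(3) by metis
  have bs: "\<phi> w \<noteq> \<phi> r" using ub r(1,2,4) by metis
  have uw: "\<not> E w u" using t_in[OF col w fw u(1)] u(3) cw by auto
  have ur: "\<not> E u r" using r(6) u(1,3) sym by blast
  have uv: "u \<noteq> v" using u(2) irr by blast
  have wv: "w \<noteq> v" using vw irr by blast
  have rv: "r \<noteq> v" using r(2) irr by blast
  have rnb: "\<forall>y\<in>V. E r y \<longrightarrow> \<phi> y \<noteq> \<phi> r" using proper[OF col r(1)] by metis
  define \<phi>1 where "\<phi>1 = \<phi>(r := c)"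
  have s1: "L_colouring V E L \<phi>1" "reconf V E L \<phi> \<phi>1" using stp[OF col r(1) r(5) r(6)] unfolding \<phi>1_def by auto
  have c2: "\<forall>y\<in>V. E v y \<longrightarrow> \<phi>1 y \<noteq> \<phi> r" using us sc unfolding \<phi>1_def by auto
  define \<phi>2 where "\<phi>2 = \<phi>1(v := \<phi> r)"
  have s2: "L_colouring V E L \<phi>2" "reconf V E L \<phi>1 \<phi>2" using stp[OF s1(1) v sv c2] unfolding \<phi>2_def by auto
  have c3: "\<forall>y\<in>V. E w y \<longrightarrow> \<phi>2 y \<noteq> \<phi> v" using uaw sa ac unfolding \<phi>1_def \<phi>2_def by auto
  define \<phi>3 where "\<phi>3 = \<phi>2(w := \<phi> v)"
  have s3: "L_colouring V E L \<phi>3" "reconf V E L \<phi>2 \<phi>3" using stp[OF s2(1) w aw c3] unfolding \<phi>3_def by auto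
  have c4: "\<forall>y\<in>V. E v y \<longrightarrow> \<phi>3 y \<noteq> \<phi> w" using ub ba bc irr unfolding \<phi>1_def \<phi>2_def \<phi>3_def by auto
  define \<phi>4 where "\<phi>4 = \<phi>3(v := \<phi> w)"
  have s4: "L_colouring V E L \<phi>4" "reconf V E L \<phi>3 \<phi>4" using stp[OF s3(1) v bv c4] unfolding \<phi>4_def by auto
  have c5: "\<forall>y\<in>V. E r y \<longrightarrow> \<phi>4 y \<noteq> \<phi> r" using rnb bs sa irr unfolding \<phi>1_def \<phi>2_def \<phi>3_def \<phi>4_def by auto
  define \<phi>5 where "\<phi>5 = \<phi>4(r := \<phi> r)"
  have s5: "L_colouring V E L \<phi>5" "reconf V E L \<phi>4 \<phi>5" using stp[OF s4(1) r(1) sr c5] unfolding \<phi>5_def by auto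
  have c6: "\<forall>y\<in>V. E u y \<longrightarrow> \<phi>5 y \<noteq> \<phi> v" using ua ba uw ur sym irr unfolding \<phi>1_def \<phi>2_def \<phi>3_def \<phi>4_def \<phi>5_def by auto
  define \<phi>6 where "\<phi>6 = \<phi>5(u := \<phi> v)"
  have s6: "L_colouring V E L \<phi>6" "reconf V E L \<phi>5 \<phi>6" using stp[OF s5(1) u(1) au c6] unfolding \<phi>6_def by auto
  have c7: "\<forall>y\<in>V. E v y \<longrightarrow> \<phi>6 y \<noteq> c" using uc u(3) ac sc irr unfolding \<phi>1_def \<phi>2_def \<phi>3_def \<phi>4_def \<phi>5_def \<phi>6_def by auto
  define \<phi>7 where "\<phi>7 = \<phi>6(v := c)"
  have s7: "reconf V E L \<phi>6 \<phi>7" using stp[OF s6(1) v cv c7] unfolding \<phi>7_def by auto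
  have "reconf V E L \<phi> \<phi>7"
    using reconf_trans[OF s1(2) reconf_trans[OF s2(2) reconf_trans[OF s3(2)
          reconf_trans[OF s4(2) reconf_trans[OF s5(2) reconf_trans[OF s6(2) s7]]]]]] .
  moreover have "\<phi>7 v = c" unfolding \<phi>7_def by simp
  ultimately show ?thesis unfolding Goal_def by blast
qed

lemma goal_trans: "reconf V E L \<phi> \<phi>' \<Longrightarrow> Goal \<phi>' \<Longrightarrow> Goal \<phi>"
  unfolding Goal_def using reconf_trans by blast

lemma easy:
  assumes col: "L_colouring V E L \<phi>"
    and IH: "\<And>\<phi>'. L_colouring V E L \<phi>' \<Longrightarrow> (\<exists>x\<in>V. \<not> frozen V E L \<phi>' x)
              \<Longrightarrow> card (Bs \<phi>') < card (Bs \<phi>) \<Longrightarrow> Goal \<phi>'"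
    and nres: "\<not> (Bs \<phi> \<noteq> {} \<and> (\<forall>u\<in>Bs \<phi>. frozen V E L \<phi> u) \<and> frozen V E L \<phi> v \<and> frozen V E L \<phi> w)"
  shows "Goal \<phi>"
proof -
  consider (empty) "Bs \<phi> = {}" | (ub) "\<exists>u\<in>Bs \<phi>. \<not> frozen V E L \<phi> u"
    | (nv) "Bs \<phi> \<noteq> {}" "\<forall>u\<in>Bs \<phi>. frozen V E L \<phi> u" "\<not> frozen V E L \<phi> v"
    | (nw) "Bs \<phi> \<noteq> {}" "\<forall>u\<in>Bs \<phi>. frozen V E L \<phi> u" "frozen V E L \<phi> v" "\<not> frozen V E L \<phi> w"
    using nres by blast
  then show ?thesis
  proof cases
    case empty
    then have "\<forall>y\<in>V. E v y \<longrightarrow> \<phi> y \<noteq> c" unfolding Bs_def by blast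
    then have "reconf V E L \<phi> (\<phi>(v := c))" using stp(2)[OF col v cv] by blast
    then show ?thesis unfolding Goal_def by (intro exI[of _ "\<phi>(v := c)"]) simp
  next
    case ub
    then obtain u where uB: "u \<in> Bs \<phi>" and nfu: "\<not> frozen V E L \<phi> u" by blast
    have u: "u \<in> V" "E v u" "\<phi> u = c" using uB unfolding Bs_def by auto
    obtain e where e: "e \<in> L u" "e \<noteq> \<phi> u" "\<forall>y\<in>V. E u y \<longrightarrow> \<phi> y \<noteq> e" using free[OF nfu] by blast
    have s: "L_colouring V E L (\<phi>(u := e))" "reconf V E L \<phi> (\<phi>(u := e))" using stp[OF col u(1) e(1) e(3)] by auto
    have "Bs (\<phi>(u := e)) = Bs \<phi> - {u}" using u e(2) unfolding Bs_def by auto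
    then have lt: "card (Bs (\<phi>(u := e))) < card (Bs \<phi>)" using card_Diff1_less[OF finB uB] by simp
    have "\<not> frozen V E L (\<phi>(u := e)) u" using moved_unfrozen[OF col irr u(1) e(2)] .
    then have "Goal (\<phi>(u := e))" using IH[OF s(1) _ lt] u(1) by blast
    then show ?thesis using goal_trans s(2) by blast
  next
    case nv
    then obtain u where uB: "u \<in> Bs \<phi>" and fu: "frozen V E L \<phi> u" by blast
    have u: "u \<in> V" "E v u" "\<phi> u = c" using uB unfolding Bs_def by auto
    obtain e where e: "e \<in> L v" "e \<noteq> \<phi> v" "\<forall>y\<in>V. E v y \<longrightarrow> \<phi> y \<noteq> e" using free[OF nv(3)] by blast
    have s1: "L_colouring V E L (\<phi>(v := e))" "reconf V E L \<phi> (\<phi>(v := e))" using stp[OF col v e(1) e(3)] by auto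
    have au: "\<phi> v \<in> L u" using t_in[OF col u(1) fu v sym[OF u(2)]] .
    have ua: "\<forall>y\<in>V. E u y \<longrightarrow> \<phi> y = \<phi> v \<longrightarrow> y = v" using uniq2[OF col u(1) fu v sym[OF u(2)]] .
    have c2: "\<forall>y\<in>V. E u y \<longrightarrow> (\<phi>(v := e)) y \<noteq> \<phi> v" using ua e(2) by auto
    define \<phi>2 where "\<phi>2 = (\<phi>(v := e))(u := \<phi> v)"
    have s2: "L_colouring V E L \<phi>2" "reconf V E L (\<phi>(v := e)) \<phi>2"
      using stp[OF s1(1) u(1) au c2] unfolding \<phi>2_def by blast+
    have ac: "\<phi> v \<noteq> c" using proper[OF col v u(1) u(2)] u(3) by simp
    have "Bs \<phi>2 = Bs \<phi> - {u}" using u ac irr unfolding Bs_def \<phi>2_def by auto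
    then have lt: "card (Bs \<phi>2) < card (Bs \<phi>)" using card_Diff1_less[OF finB uB] by simp
    have uv: "u \<noteq> v" using u(2) irr by blast
    have "\<phi> v \<noteq> (\<phi>(v := e)) u" using ac u(3) uv by simp
    then have "\<not> frozen V E L \<phi>2 u" using moved_unfrozen[OF s1(1) irr u(1)] unfolding \<phi>2_def by blast
    then have "Goal \<phi>2" using IH[OF s2(1) _ lt] u(1) by blast
    then show ?thesis using goal_trans reconf_trans[OF s1(2) s2(2)] by blast
  next
    case nw
    then obtain u where uB: "u \<in> Bs \<phi>" and fu: "frozen V E L \<phi> u" by blast
    have u: "u \<in> V" "E v u" "\<phi> u = c" using uB unfolding Bs_def by auto
    show ?thesis using wfree[OF col u nw(3) fu nw(4)] .
  qed
qed

lemma propag: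
  assumes path: "(\<lambda>a b. a \<in> V - {v} \<and> b \<in> V - {v} \<and> E a b)\<^sup>*\<^sup>* z w"
    and IH: "\<And>\<phi>'. L_colouring V E L \<phi>' \<Longrightarrow> (\<exists>x\<in>V. \<not> frozen V E L \<phi>' x)
              \<Longrightarrow> card (Bs \<phi>') < N \<Longrightarrow> Goal \<phi>'"
  shows "\<forall>\<phi>. L_colouring V E L \<phi> \<longrightarrow> card (Bs \<phi>) = N \<longrightarrow> z \<in> V - {v}
           \<longrightarrow> \<not> frozen V E L \<phi> z \<longrightarrow> Goal \<phi>"
  using path
proof (induction rule: converse_rtranclp_induct)
  case base
  show ?case
  proof (intro allI impI)
    fix \<phi> assume col: "L_colouring V E L \<phi>" and N: "card (Bs \<phi>) = N"
      and nf: "\<not> frozen V E L \<phi> w"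
    have IH': "\<And>\<phi>'. L_colouring V E L \<phi>' \<Longrightarrow> (\<exists>x\<in>V. \<not> frozen V E L \<phi>' x)
              \<Longrightarrow> card (Bs \<phi>') < card (Bs \<phi>) \<Longrightarrow> Goal \<phi>'" using IH N by blast
    show "Goal \<phi>" using easy[OF col IH'] nf by blast
  qed
next
  case (step z y)
  show ?case
  proof (intro allI impI)
    fix \<phi> assume col: "L_colouring V E L \<phi>" and N: "card (Bs \<phi>) = N"
      and zV: "z \<in> V - {v}" and nfz: "\<not> frozen V E L \<phi> z"
    have IH': "\<And>\<phi>'. L_colouring V E L \<phi>' \<Longrightarrow> (\<exists>x\<in>V. \<not> frozen V E L \<phi>' x)
              \<Longrightarrow> card (Bs \<phi>') < card (Bs \<phi>) \<Longrightarrow> Goal \<phi>'" using IH N by blast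
    show "Goal \<phi>"
    proof (cases "Bs \<phi> \<noteq> {} \<and> (\<forall>u\<in>Bs \<phi>. frozen V E L \<phi> u) \<and> frozen V E L \<phi> v \<and> frozen V E L \<phi> w")
      case False
      then show ?thesis using easy[OF col IH'] by blast
    next
      case True
      then obtain u where uB: "u \<in> Bs \<phi>" and fu: "frozen V E L \<phi> u"
        and fv: "frozen V E L \<phi> v" and fw: "frozen V E L \<phi> w" by blast
      have u: "u \<in> V" "E v u" "\<phi> u = c" using uB unfolding Bs_def by auto
      have yV: "y \<in> V - {v}" and zy: "E z y" using step.hyps(1) by blast+
      show ?thesis
      proof (cases "frozen V E L \<phi> y")
        case False
        then show ?thesis using step.IH col N yV by blast
      next
        case fy: True
        show ?thesis
        proof (cases "E v z \<and> c \<in> L z \<and> (\<forall>x\<in>V. E z x \<longrightarrow> \<phi> x \<noteq> c)")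
          case True
          have zu: "z \<noteq> u" using nfz fu by blast
          have zw: "z \<noteq> w" using nfz fw by blast
          have zV': "z \<in> V" using zV by blast
          show ?thesis using seven[OF col u fv fu fw zV' _ zu zw] True by blast
        next
          case False
          obtain e where e: "e \<in> L z" "e \<noteq> \<phi> z" "\<forall>x\<in>V. E z x \<longrightarrow> \<phi> x \<noteq> e"
            using free[OF nfz] by blast
          have ec: "E v z \<longrightarrow> e \<noteq> c" using False e by blast
          define \<phi>' where "\<phi>' = \<phi>(z := e)"
          have zV': "z \<in> V" using zV by blast
          have s: "L_colouring V E L \<phi>'" "reconf V E L \<phi> \<phi>'"
            using stp[OF col zV' e(1) e(3)] unfolding \<phi>'_def by blast+
          have zB: "z \<notin> Bs \<phi>" using nfz True by blast
          have Beq: "Bs \<phi>' = Bs \<phi>" using zB ec unfolding Bs_def \<phi>'_def by auto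
          have yV': "y \<in> V" using yV by blast
          have sy: "\<phi> z \<in> L y" using t_in[OF col yV' fy zV' sym[OF zy]] .
          have uz: "\<forall>x\<in>V. E y x \<longrightarrow> \<phi> x = \<phi> z \<longrightarrow> x = z" using uniq2[OF col yV' fy zV' sym[OF zy]] .
          have yz: "y \<noteq> z" using zy irr by blast
          have sny: "\<phi> z \<noteq> \<phi> y" using proper[OF col zV' yV' zy] .
          have nfy: "\<not> frozen V E L \<phi>' y"
            unfolding frozen_def
          proof
            assume A: "\<forall>cc\<in>L y - {\<phi>' y}. \<exists>x\<in>V. E y x \<and> \<phi>' x = cc"
            have "\<phi> z \<in> L y - {\<phi>' y}" using sy sny yz unfolding \<phi>'_def by simp
            then obtain x where x: "x \<in> V" "E y x" "\<phi>' x = \<phi> z" using A by blast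
            show False
            proof (cases "x = z")
              case True then show False using x(3) e(2) unfolding \<phi>'_def by simp
            next
              case False then show False using x uz unfolding \<phi>'_def by simp
            qed
          qed
          have "Goal \<phi>'" using step.IH s(1) Beq N yV nfy by auto
          then show ?thesis using goal_trans s(2) by blast
        qed
      qed
    qed
  qed
qed

lemma reach: "L_colouring V E L \<phi> \<Longrightarrow> (\<exists>x\<in>V. \<not> frozen V E L \<phi> x) \<Longrightarrow> Goal \<phi>"
proof (induction "card (Bs \<phi>)" arbitrary: \<phi> rule: less_induct)
  case less
  have IH': "\<And>\<phi>'. L_colouring V E L \<phi>' \<Longrightarrow> (\<exists>x\<in>V. \<not> frozen V E L \<phi>' x)
              \<Longrightarrow> card (Bs \<phi>') < card (Bs \<phi>) \<Longrightarrow> Goal \<phi>'" using less.hyps by blast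
  show ?case
  proof (cases "Bs \<phi> \<noteq> {} \<and> (\<forall>u\<in>Bs \<phi>. frozen V E L \<phi> u) \<and> frozen V E L \<phi> v \<and> frozen V E L \<phi> w")
    case False
    then show ?thesis using easy[OF less.prems(1) IH'] by blast
  next
    case True
    obtain x where x: "x \<in> V" "\<not> frozen V E L \<phi> x" using less.prems(2) by blast
    have xv: "x \<noteq> v" using True x by blast
    have wV: "w \<in> V - {v}" using w vw irr by auto
    have xV: "x \<in> V - {v}" using x xv by blast
    have path: "(\<lambda>a b. a \<in> V - {v} \<and> b \<in> V - {v} \<and> E a b)\<^sup>*\<^sup>* x w"
      using conn xV wV unfolding connected_on_def by blast
    show ?thesis using propag[OF path IH'] less.prems(1) xV x(2) by blast
  qed
qed

end

theorem mainTheorem18: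
  fixes V :: "'a set" and E :: "'a \<Rightarrow> 'a \<Rightarrow> bool" and L :: "'a \<Rightarrow> 'c set"
    and v w :: 'a and \<alpha> \<beta> :: "'a \<Rightarrow> 'c"
  assumes "simple_graph V E"
    and "connected_on V E"
    and "\<forall>u\<in>V. finite (L u) \<and> card (L u) \<ge> degree V E u + 1"
    and "v \<in> V" and "w \<in> V" and "E v w"
    and "\<not> L v \<subseteq> L w"
    and "connected_on (V - {v}) E"
    and "unfrozen V E L \<alpha>" and "unfrozen V E L \<beta>"
  shows "reconf V E L \<alpha> \<beta>"
proof -
  obtain c where cv: "c \<in> L v" and cw: "c \<notin> L w" using assms(7) by blast
  interpret S: setting V E L v w c
    using assms(1,3,4,5,6,8) cv cw by unfold_locales auto
  have ca: "L_colouring V E L \<alpha>" "\<exists>x\<in>V. \<not> frozen V E L \<alpha> x"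
    using assms(9) unfolding unfrozen_def by auto
  have cb: "L_colouring V E L \<beta>" "\<exists>x\<in>V. \<not> frozen V E L \<beta> x"
    using assms(10) unfolding unfrozen_def by auto
  obtain \<psi>1 where p1: "reconf V E L \<alpha> \<psi>1" "\<psi>1 v = c"
    using S.reach[OF ca] unfolding S.Goal_def by blast
  obtain \<psi>2 where p2: "reconf V E L \<beta> \<psi>2" "\<psi>2 v = c"
    using S.reach[OF cb] unfolding S.Goal_def by blast
  have "reconf V E L \<psi>1 \<psi>2"
    using Cc_connected[OF assms(1,8,3,4,5,6) cv cw reconf_col[OF p1(1) ca(1)]
        reconf_col[OF p2(1) cb(1)] p1(2) p2(2)] .
  then show ?thesis using reconf_trans[OF p1(1)] reconf_sym[OF p2(1)] reconf_trans by blast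
qed

end
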